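(* Let $k\ge4$ be even and let $G=(V,E)$ be a $k$-uniform cored hypergraph with Laplacian tensor $\mathcal L$ and signless Laplacian tensor $\mathcal Q$. For every $e\in E$ let $i_e\in e$ be a cored vertex. Then: (i) If $\mathbf x\in\mathbb R^n_+$ is an H-eigenvector of $\mathcal Q$ corresponding to $\lambda(\mathcal Q)$, then the vector $\mathbf y\in\mathbb R^n$ with $y_{i_e}=-x_{i_e}$ for all $e\in E$ and $y_j=x_j$ for all other $j$ is an H-eigenvector of $\mathcal L$ corresponding to $\lambda(\mathcal L)$. (ii) If $\mathbf x\in\mathbb R^n$ is an H-eigenvector of $\mathcal L$ corresponding to $\lambda(\mathcal L)$, then the vector $\mathbf y\in\mathbb R^n_+$ with $y_i=|x_i|$ for all $i\in[n]$ is an H-eigenvector of $\mathcal Q$ corresponding to $\lambda(\mathcal Q)$.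
   Context: A $k$-uniform hypergraph $G=(V,E)$ has $V=[n]$ and a nonempty set $E$ of $k$-element subsets of $V$; $d_i$ is the number of edges containing $i$. A cored vertex is a vertex of degree one; $G$ is cored if every edge contains a cored vertex. With $\mathcal D$ the diagonal tensor with entries $d_i$ and $\mathcal A$ the order-$k$ tensor with entries $\frac1{(k-1)!}$ at index tuples forming an edge and $0$ otherwise, $\mathcal L=\mathcal D-\mathcal A$ and $\mathcal Q=\mathcal D+\mathcal A$; thus $(\mathcal L\mathbf x^{k-1})_i=d_ix_i^{k-1}-\sum_{e\ni i}\prod_{s\in e\setminus\{i\}}x_s$ and $(\mathcal Q\mathbf x^{k-1})_i=d_ix_i^{k-1}+\sum_{e\ni i}\prod_{s\in e\setminus\{i\}}x_s$. A real $\lambda$ is an H-eigenvalue of $\mathcal T$ with H-eigenvector $\mathbf x\neq0$ if $(\mathcal T\mathbf x^{k-1})_i=\lambda x_i^{k-1}$ for all $i$; $\lambda(\mathcal T)$ is the largest H-eigenvalue. $\mathbb R^n_+$ is the nonnegative orthant. *)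

theory Defs
  imports Complex_Main
begin

text \<open>Vertices are 1..n; a vector in R^n is a function nat => real (only the
values on {1..n} matter); an order-k tensor of dimension n is a function on
index lists (nat list => real), only lists of length k with entries in {1..n} matter.\<close>

definition k_uniform_hypergraph :: "nat \<Rightarrow> nat \<Rightarrow> nat set set \<Rightarrow> bool" where
  "k_uniform_hypergraph n k E \<longleftrightarrow> E \<noteq> {} \<and> (\<forall>e\<in>E. e \<subseteq> {1..n} \<and> card e = k)"

definition hdeg :: "nat set set \<Rightarrow> nat \<Rightarrow> nat" where
  "hdeg E i = card {e\<in>E. i \<in> e}"

definition cored_vertex :: "nat set set \<Rightarrow> nat \<Rightarrow> bool" where
  "cored_vertex E i \<longleftrightarrow> hdeg E i = 1"

definition cored :: "nat set set \<Rightarrow> bool" where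
  "cored E \<longleftrightarrow> (\<forall>e\<in>E. \<exists>i\<in>e. cored_vertex E i)"

definition degree_tensor :: "nat set set \<Rightarrow> nat list \<Rightarrow> real" where
  "degree_tensor E is =
     (if is \<noteq> [] \<and> (\<forall>j\<in>set is. j = hd is) then real (hdeg E (hd is)) else 0)"

definition adjacency_tensor :: "nat \<Rightarrow> nat set set \<Rightarrow> nat list \<Rightarrow> real" where
  "adjacency_tensor k E is =
     (if length is = k \<and> set is \<in> E then 1 / fact (k - 1) else 0)"

definition laplacian_tensor :: "nat \<Rightarrow> nat set set \<Rightarrow> nat list \<Rightarrow> real" where
  "laplacian_tensor k E is = degree_tensor E is - adjacency_tensor k E is"

definition signless_laplacian_tensor :: "nat \<Rightarrow> nat set set \<Rightarrow> nat list \<Rightarrow> real" where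
  "signless_laplacian_tensor k E is = degree_tensor E is + adjacency_tensor k E is"

definition tensor_apply :: "nat \<Rightarrow> nat \<Rightarrow> (nat list \<Rightarrow> real) \<Rightarrow> (nat \<Rightarrow> real) \<Rightarrow> nat \<Rightarrow> real" where
  "tensor_apply n k T x i =
     (\<Sum>js \<in> {js. length js = k - 1 \<and> set js \<subseteq> {1..n}}. T (i # js) * prod_list (map x js))"

definition H_eigenpair :: "nat \<Rightarrow> nat \<Rightarrow> (nat list \<Rightarrow> real) \<Rightarrow> real \<Rightarrow> (nat \<Rightarrow> real) \<Rightarrow> bool" where
  "H_eigenpair n k T lam x \<longleftrightarrow>
     (\<exists>i\<in>{1..n}. x i \<noteq> 0) \<and>
     (\<forall>i\<in>{1..n}. tensor_apply n k T x i = lam * x i ^ (k - 1))"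

definition H_eigenvalue :: "nat \<Rightarrow> nat \<Rightarrow> (nat list \<Rightarrow> real) \<Rightarrow> real \<Rightarrow> bool" where
  "H_eigenvalue n k T lam \<longleftrightarrow> (\<exists>x. H_eigenpair n k T lam x)"

definition largest_H_eigenvalue :: "nat \<Rightarrow> nat \<Rightarrow> (nat list \<Rightarrow> real) \<Rightarrow> real \<Rightarrow> bool" where
  "largest_H_eigenvalue n k T lam \<longleftrightarrow>
     H_eigenvalue n k T lam \<and> (\<forall>mu. H_eigenvalue n k T mu \<longrightarrow> mu \<le> lam)"

end

theory Submission
  imports Defs "HOL-Analysis.Analysis" "HOL-Combinatorics.Multiset_Permutations"
begin

definition Fv :: "nat \<Rightarrow> nat set set \<Rightarrow> real \<Rightarrow> (nat \<Rightarrow> real) \<Rightarrow> nat \<Rightarrow> real" where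
  "Fv k E \<sigma> x i = real (hdeg E i) * x i ^ (k - 1) + \<sigma> * (\<Sum>e\<in>{e\<in>E. i \<in> e}. \<Prod>s\<in>e - {i}. x s)"

lemma deg_part:
  assumes i: "i \<in> {1..n}"
  shows "(\<Sum>js\<in>{js. length js = k - 1 \<and> set js \<subseteq> {1..n}}. degree_tensor E (i # js) * prod_list (map x js))
         = real (hdeg E i) * x i ^ (k - 1)"
proof -
  let ?J = "{js. length js = k - 1 \<and> set js \<subseteq> {1..n}}"
  have fin: "finite ?J" using finite_lists_length_eq[of "{1..n}" "k-1"] by (simp add: conj_commute)
  have r: "replicate (k-1) i \<in> ?J" using i by auto
  have "(\<Sum>js\<in>?J. degree_tensor E (i # js) * prod_list (map x js))
      = (\<Sum>js\<in>?J. if js = replicate (k-1) i then real (hdeg E i) * x i ^ (k - 1) else 0)"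
  proof (rule sum.cong)
    fix js assume js: "js \<in> ?J"
    show "degree_tensor E (i # js) * prod_list (map x js) = (if js = replicate (k-1) i then real (hdeg E i) * x i ^ (k - 1) else 0)"
    proof (cases "\<forall>j\<in>set js. j = i")
      case True
      then have "js = replicate (k-1) i" using js by (auto intro: replicate_eqI)
      then show ?thesis by (simp add: degree_tensor_def prod_list_replicate)
    next
      case False
      then have "js \<noteq> replicate (k-1) i" by auto
      then show ?thesis using False by (auto simp: degree_tensor_def)
    qed
  qed simp
  also have "\<dots> = real (hdeg E i) * x i ^ (k - 1)"
    using fin r by (simp add: sum.delta')
  finally show ?thesis .
qed

lemma adj_part:
  assumes hg: "k_uniform_hypergraph n k E" and k: "k \<ge> 1" and i: "i \<in> {1..n}"
  shows "(\<Sum>js\<in>{js. length js = k - 1 \<and> set js \<subseteq> {1..n}}. adjacency_tensor k E (i # js) * prod_list (map x js))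
         = (\<Sum>e\<in>{e\<in>E. i \<in> e}. \<Prod>s\<in>e - {i}. x s)"
proof -
  let ?J = "{js. length js = k - 1 \<and> set js \<subseteq> {1..n}}"
  let ?Ei = "{e\<in>E. i \<in> e}"
  define S where "S e = permutations_of_set (e - {i})" for e
  have Esub: "\<And>e. e \<in> E \<Longrightarrow> e \<subseteq> {1..n} \<and> card e = k" using hg by (auto simp: k_uniform_hypergraph_def)
  have finE: "finite E"
    by (rule finite_subset[of _ "Pow {1..n}"]) (use Esub in auto)
  have fine: "\<And>e. e \<in> E \<Longrightarrow> finite e" using Esub k by (metis card.infinite not_one_le_zero)
  have fin: "finite ?J" using finite_lists_length_eq[of "{1..n}" "k-1"] by (simp add: conj_commute)
  have Sfacts: "\<And>e js. e \<in> ?Ei \<Longrightarrow> js \<in> S e \<Longrightarrow> set js = e - {i} \<and> distinct js \<and> length js = k - 1 \<and> set js \<subseteq> {1..n} \<and> set (i # js) = e"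
  proof -
    fix e js assume e: "e \<in> ?Ei" and js: "js \<in> S e"
    have sj: "set js = e - {i}" "distinct js" using js by (auto simp: S_def permutations_of_set_def)
    have "length js = card (e - {i})" using sj distinct_card by metis
    also have "\<dots> = k - 1" using e Esub fine by (simp add: card_Diff_singleton)
    finally show "set js = e - {i} \<and> distinct js \<and> length js = k - 1 \<and> set js \<subseteq> {1..n} \<and> set (i # js) = e"
      using sj e Esub by auto
  qed
  have US: "(\<Union>e\<in>?Ei. S e) \<subseteq> ?J" using Sfacts by blast
  have "(\<Sum>js\<in>?J. adjacency_tensor k E (i # js) * prod_list (map x js))
      = (\<Sum>js\<in>(\<Union>e\<in>?Ei. S e). (1 / fact (k-1)) * prod_list (map x js))"
  proof (rule sum.mono_neutral_cong_right[OF fin US])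
    show "\<forall>js\<in>?J - (\<Union>e\<in>?Ei. S e). adjacency_tensor k E (i # js) * prod_list (map x js) = 0"
    proof
      fix js assume js: "js \<in> ?J - (\<Union>e\<in>?Ei. S e)"
      show "adjacency_tensor k E (i # js) * prod_list (map x js) = 0"
      proof (cases "set (i # js) \<in> E")
        case True
        let ?e = "set (i # js)"
        have "card ?e = length (i # js)" using True Esub js k by auto
        then have d: "distinct (i # js)" by (rule card_distinct)
        then have "js \<in> S ?e" unfolding S_def permutations_of_set_def by auto
        moreover have "?e \<in> ?Ei" using True by auto
        ultimately show ?thesis using js by blast
      qed (simp add: adjacency_tensor_def)
    qed
  next
    fix js assume "js \<in> (\<Union>e\<in>?Ei. S e)"
    then obtain e where "e \<in> ?Ei" "js \<in> S e" by blast
    then have "length (i # js) = k" "set (i # js) \<in> E" using Sfacts[of e js] k by auto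
    then show "adjacency_tensor k E (i # js) * prod_list (map x js) = (1 / fact (k-1)) * prod_list (map x js)"
      by (simp add: adjacency_tensor_def)
  qed
  also have "\<dots> = (\<Sum>e\<in>?Ei. \<Sum>js\<in>S e. (1 / fact (k-1)) * prod_list (map x js))"
  proof (rule sum.UNION_disjoint)
    show "finite ?Ei" using finE by simp
    show "\<forall>e\<in>?Ei. finite (S e)" by (simp add: S_def)
    show "\<forall>e\<in>?Ei. \<forall>e'\<in>?Ei. e \<noteq> e' \<longrightarrow> S e \<inter> S e' = {}"
    proof (intro ballI impI)
      fix e e' assume e: "e \<in> ?Ei" and e': "e' \<in> ?Ei" and ne: "e \<noteq> e'"
      show "S e \<inter> S e' = {}"
      proof (rule ccontr)
        assume "S e \<inter> S e' \<noteq> {}"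
        then obtain js where "js \<in> S e" "js \<in> S e'" by blast
        then have "set (i # js) = e" "set (i # js) = e'" using Sfacts e e' by blast+
        then show False using ne by simp
      qed
    qed
  qed
  also have "\<dots> = (\<Sum>e\<in>?Ei. \<Prod>s\<in>e - {i}. x s)"
  proof (rule sum.cong[OF refl])
    fix e assume e: "e \<in> ?Ei"
    have "(\<Sum>js\<in>S e. (1 / fact (k-1)) * prod_list (map x js)) = (\<Sum>js\<in>S e. (1 / fact (k-1)) * (\<Prod>s\<in>e - {i}. x s))"
    proof (rule sum.cong[OF refl])
      fix js assume "js \<in> S e"
      then have "set js = e - {i}" "distinct js" using Sfacts e by auto
      then show "(1 / fact (k-1)) * prod_list (map x js) = (1 / fact (k-1)) * (\<Prod>s\<in>e - {i}. x s)"
        by (metis prod.distinct_set_conv_list)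
    qed
    also have "\<dots> = real (card (S e)) * (1 / fact (k-1)) * (\<Prod>s\<in>e - {i}. x s)" by simp
    also have "card (S e) = fact (k - 1)"
      using e Esub fine by (simp add: S_def card_Diff_singleton)
    finally show "(\<Sum>js\<in>S e. (1 / fact (k-1)) * prod_list (map x js)) = (\<Prod>s\<in>e - {i}. x s)"
      by simp
  qed
  finally show ?thesis .
qed

lemma tensor_formula:
  assumes hg: "k_uniform_hypergraph n k E" and k: "k \<ge> 1" and i: "i \<in> {1..n}"
  shows "tensor_apply n k (signless_laplacian_tensor k E) x i = Fv k E 1 x i"
    and "tensor_apply n k (laplacian_tensor k E) x i = Fv k E (-1) x i"
  using deg_part[OF i, where E=E and k=k and x=x] adj_part[OF hg k i, of x]
  by (simp_all add: tensor_apply_def signless_laplacian_tensor_def laplacian_tensor_def Fv_def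
      ring_distribs sum.distrib sum_subtractf)


definition Pv :: "nat \<Rightarrow> nat \<Rightarrow> nat set set \<Rightarrow> real \<Rightarrow> (nat \<Rightarrow> real) \<Rightarrow> real" where
  "Pv n k E \<sigma> y = (\<Sum>j\<in>{1..n}. real (hdeg E j) * y j ^ k) + \<sigma> * real k * (\<Sum>e\<in>E. \<Prod>s\<in>e. y s)"

definition gv :: "nat \<Rightarrow> nat \<Rightarrow> (nat \<Rightarrow> real) \<Rightarrow> real" where
  "gv n k y = (\<Sum>j\<in>{1..n}. y j ^ k)"

locale chg =
  fixes n k :: nat and E :: "nat set set" and ie :: "nat set \<Rightarrow> nat"
  assumes ev: "even k" and k4: "k \<ge> 4"
    and hg: "k_uniform_hypergraph n k E"
    and cor: "cored E"
    and iec: "\<forall>e\<in>E. ie e \<in> e \<and> cored_vertex E (ie e)"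
begin

lemma Esub: "e \<in> E \<Longrightarrow> e \<subseteq> {1..n} \<and> card e = k" using hg by (auto simp: k_uniform_hypergraph_def)

lemma Esub': "e \<in> E \<Longrightarrow> s \<in> e \<Longrightarrow> 1 \<le> s \<and> s \<le> n" using Esub by fastforce

lemma finE: "finite E"
  by (rule finite_subset[of _ "Pow {1..n}"]) (use Esub in auto)

lemma fine: "e \<in> E \<Longrightarrow> finite e" using Esub k4 by (metis card.infinite not_numeral_le_zero)

lemma Ene: "E \<noteq> {}" using hg by (simp add: k_uniform_hypergraph_def)

lemma n1: "1 \<le> n"
proof -
  obtain e where e: "e \<in> E" using Ene by auto
  then have "e \<noteq> {}" using Esub k4 by (metis card.empty not_numeral_le_zero)
  then show ?thesis using Esub[OF e] by auto
qed

lemma pk: "(a::real) * a ^ (k - 1) = a ^ k"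
  using k4 by (cases k) auto

lemma pk': "(a::real) * a ^ (k - Suc 0) = a ^ k"
  using pk by simp

lemma sum_F: "(\<Sum>i\<in>{1..n}. y i * Fv k E \<sigma> y i) = Pv n k E \<sigma> y"
proof -
  have 1: "\<And>i. y i * Fv k E \<sigma> y i = real (hdeg E i) * y i ^ k + \<sigma> * (\<Sum>e\<in>{e\<in>E. i\<in>e}. y i * (\<Prod>s\<in>e-{i}. y s))"
    by (simp add: Fv_def algebra_simps sum_distrib_left pk pk')
  have 2: "(\<Sum>i\<in>{1..n}. \<Sum>e\<in>{e\<in>E. i\<in>e}. y i * (\<Prod>s\<in>e-{i}. y s))
       = (\<Sum>e\<in>E. \<Sum>i\<in>{i\<in>{1..n}. i\<in>e}. y i * (\<Prod>s\<in>e-{i}. y s))"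
    by (rule sum.swap_restrict) (simp_all add: finE)
  have 3: "(\<Sum>i\<in>{i\<in>{1..n}. i\<in>e}. y i * (\<Prod>s\<in>e-{i}. y s)) = real k * (\<Prod>s\<in>e. y s)" if e: "e \<in> E" for e
  proof -
    have "{i\<in>{1..n}. i\<in>e} = e" using Esub[OF e] by auto
    moreover have "\<And>i. i \<in> e \<Longrightarrow> y i * (\<Prod>s\<in>e-{i}. y s) = (\<Prod>s\<in>e. y s)"
      using fine[OF e] by (simp add: prod.remove)
    ultimately show ?thesis using Esub[OF e] by simp
  qed
  have "(\<Sum>i\<in>{1..n}. y i * Fv k E \<sigma> y i) = (\<Sum>i\<in>{1..n}. real (hdeg E i) * y i ^ k) + \<sigma> * (\<Sum>i\<in>{1..n}. \<Sum>e\<in>{e\<in>E. i\<in>e}. y i * (\<Prod>s\<in>e-{i}. y s))"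
    unfolding 1 sum.distrib sum_distrib_left by simp
  also have "(\<Sum>i\<in>{1..n}. \<Sum>e\<in>{e\<in>E. i\<in>e}. y i * (\<Prod>s\<in>e-{i}. y s)) = (\<Sum>e\<in>E. real k * (\<Prod>s\<in>e. y s))"
    unfolding 2 by (rule sum.cong[OF refl 3])
  finally show ?thesis unfolding Pv_def by (simp add: sum_distrib_left mult.assoc)
qed

lemma rayleigh:
  assumes "\<forall>i\<in>{1..n}. Fv k E \<sigma> x i = \<mu> * x i ^ (k - 1)"
  shows "Pv n k E \<sigma> x = \<mu> * gv n k x"
proof -
  have "Pv n k E \<sigma> x = (\<Sum>i\<in>{1..n}. x i * (\<mu> * x i ^ (k - 1)))"
    unfolding sum_F[symmetric] using assms by simp
  also have "\<dots> = \<mu> * gv n k x"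
    by (simp add: gv_def sum_distrib_left pk pk' algebra_simps)
  finally show ?thesis .
qed

lemma gv_pos:
  assumes "\<exists>i\<in>{1..n}. x i \<noteq> 0"
  shows "gv n k x > 0"
proof -
  obtain i where i: "i \<in> {1..n}" "x i \<noteq> 0" using assms by blast
  show ?thesis unfolding gv_def
    by (rule sum_pos2[of _ i]) (use i ev k4 in \<open>auto simp: zero_less_power_eq zero_le_even_power\<close>)
qed

lemma gv_nonneg: "gv n k x \<ge> 0"
  unfolding gv_def using ev by (simp add: sum_nonneg zero_le_even_power)

lemma Pv_cong: "(\<And>j. j \<in> {1..n} \<Longrightarrow> y j = y' j) \<Longrightarrow> Pv n k E \<sigma> y = Pv n k E \<sigma> y'"
  unfolding Pv_def
  apply (intro arg_cong2[where f="(+)"] arg_cong2[where f="(*)"] sum.cong prod.cong refl)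
  using Esub by fastforce+

lemma gv_cong: "(\<And>j. j \<in> {1..n} \<Longrightarrow> y j = y' j) \<Longrightarrow> gv n k y = gv n k y'"
  unfolding gv_def by simp

lemma Pv_hom: "Pv n k E \<sigma> (\<lambda>j. c * y j) = c ^ k * Pv n k E \<sigma> y"
proof -
  have "(\<Prod>s\<in>e. c * y s) = c ^ k * (\<Prod>s\<in>e. y s)" if "e \<in> E" for e
    using Esub[OF that] by (simp add: prod.distrib)
  then have "(\<Sum>e\<in>E. \<Prod>s\<in>e. c * y s) = (\<Sum>e\<in>E. c ^ k * (\<Prod>s\<in>e. y s))"
    by (rule sum.cong[OF refl])
  then show ?thesis unfolding Pv_def
    by (simp add: power_mult_distrib sum_distrib_left[symmetric] sum_distrib_right[symmetric] algebra_simps)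
qed

lemma gv_hom: "gv n k (\<lambda>j. c * y j) = c ^ k * gv n k y"
  unfolding gv_def by (simp add: power_mult_distrib sum_distrib_left)

lemma gv_abs: "gv n k (\<lambda>j. \<bar>x j\<bar>) = gv n k x"
  unfolding gv_def using ev by (simp add: power_even_abs)

lemma Pv_abs: "Pv n k E \<sigma> x \<le> Pv n k E 1 (\<lambda>j. \<bar>x j\<bar>)" if "\<bar>\<sigma>\<bar> \<le> 1"
proof -
  have "\<sigma> * real k * (\<Sum>e\<in>E. \<Prod>s\<in>e. x s) \<le> \<bar>\<sigma> * real k * (\<Sum>e\<in>E. \<Prod>s\<in>e. x s)\<bar>" by simp
  also have "\<dots> = \<bar>\<sigma>\<bar> * real k * \<bar>\<Sum>e\<in>E. \<Prod>s\<in>e. x s\<bar>" by (simp add: abs_mult)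
  also have "\<dots> \<le> 1 * real k * (\<Sum>e\<in>E. \<Prod>s\<in>e. \<bar>x s\<bar>)"
  proof (rule mult_mono)
    show "\<bar>\<Sum>e\<in>E. \<Prod>s\<in>e. x s\<bar> \<le> (\<Sum>e\<in>E. \<Prod>s\<in>e. \<bar>x s\<bar>)"
      by (rule order_trans[OF sum_abs]) (simp add: abs_prod)
  qed (use that in \<open>auto intro: sum_nonneg prod_nonneg mult_left_le_one_le\<close>)
  finally show ?thesis unfolding Pv_def using ev by (simp add: power_even_abs)
qed

lemma Pv_upd:
  assumes i: "i \<in> {1..n}"
  shows "\<exists>C. \<forall>w. Pv n k E 1 (z(i:=w)) = real (hdeg E i) * w ^ k + real k * w * (\<Sum>e\<in>{e\<in>E. i\<in>e}. \<Prod>s\<in>e-{i}. z s) + C"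
proof -
  have s1: "(\<Sum>j\<in>{1..n}. real (hdeg E j) * (z(i:=w)) j ^ k) = real (hdeg E i) * w ^ k + (\<Sum>j\<in>{1..n}-{i}. real (hdeg E j) * z j ^ k)" for w
  proof -
    have "(\<Sum>j\<in>{1..n}. real (hdeg E j) * (z(i:=w)) j ^ k) = real (hdeg E i) * w ^ k + (\<Sum>j\<in>{1..n}-{i}. real (hdeg E j) * (z(i:=w)) j ^ k)"
      using sum.remove[of "{1..n}" i "\<lambda>j. real (hdeg E j) * (z(i:=w)) j ^ k"] i by simp
    also have "(\<Sum>j\<in>{1..n}-{i}. real (hdeg E j) * (z(i:=w)) j ^ k) = (\<Sum>j\<in>{1..n}-{i}. real (hdeg E j) * z j ^ k)"
      by (rule sum.cong) auto
    finally show ?thesis .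
  qed
  have s2: "(\<Sum>e\<in>E. \<Prod>s\<in>e. (z(i:=w)) s) = w * (\<Sum>e\<in>{e\<in>E. i\<in>e}. \<Prod>s\<in>e-{i}. z s) + (\<Sum>e\<in>{e\<in>E. i\<notin>e}. \<Prod>s\<in>e. z s)" for w
  proof -
    have "(\<Sum>e\<in>E. \<Prod>s\<in>e. (z(i:=w)) s) = (\<Sum>e\<in>E. if i \<in> e then w * (\<Prod>s\<in>e-{i}. z s) else (\<Prod>s\<in>e. z s))"
    proof (rule sum.cong[OF refl])
      fix e assume e: "e \<in> E"
      show "(\<Prod>s\<in>e. (z(i:=w)) s) = (if i \<in> e then w * (\<Prod>s\<in>e-{i}. z s) else (\<Prod>s\<in>e. z s))"
      proof (cases "i \<in> e")
        case True
        have "(\<Prod>s\<in>e. (z(i:=w)) s) = (z(i:=w)) i * (\<Prod>s\<in>e-{i}. (z(i:=w)) s)"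
          by (rule prod.remove[OF fine[OF e] True])
        also have "(\<Prod>s\<in>e-{i}. (z(i:=w)) s) = (\<Prod>s\<in>e-{i}. z s)" by (rule prod.cong) auto
        finally show ?thesis using True by simp
      next
        case False
        have "(\<Prod>s\<in>e. (z(i:=w)) s) = (\<Prod>s\<in>e. z s)" by (rule prod.cong) (use False in auto)
        then show ?thesis using False by simp
      qed
    qed
    also have "\<dots> = (\<Sum>e\<in>E \<inter> {e. i\<in>e}. w * (\<Prod>s\<in>e-{i}. z s)) + (\<Sum>e\<in>E \<inter> - {e. i\<in>e}. \<Prod>s\<in>e. z s)"
      by (rule sum.If_cases[OF finE])
    also have "E \<inter> {e. i\<in>e} = {e\<in>E. i\<in>e}" by auto
    also have "E \<inter> - {e. i\<in>e} = {e\<in>E. i\<notin>e}" by auto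
    finally show ?thesis by (simp add: sum_distrib_left)
  qed
  show ?thesis
  proof (intro exI allI)
    fix w
    show "Pv n k E 1 (z(i:=w)) = real (hdeg E i) * w ^ k + real k * w * (\<Sum>e\<in>{e\<in>E. i\<in>e}. \<Prod>s\<in>e-{i}. z s) + ((\<Sum>j\<in>{1..n}-{i}. real (hdeg E j) * z j ^ k) + real k * (\<Sum>e\<in>{e\<in>E. i\<notin>e}. \<Prod>s\<in>e. z s))"
      unfolding Pv_def s1 s2 by (simp add: algebra_simps)
  qed
qed

lemma gv_upd:
  assumes i: "i \<in> {1..n}"
  shows "\<exists>C. \<forall>w. gv n k (z(i:=w)) = w ^ k + C"
proof -
  have "gv n k (z(i:=w)) = w ^ k + (\<Sum>j\<in>{1..n}-{i}. z j ^ k)" for w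
  proof -
    have "gv n k (z(i:=w)) = w ^ k + (\<Sum>j\<in>{1..n}-{i}. (z(i:=w)) j ^ k)"
      unfolding gv_def using sum.remove[of "{1..n}" i "\<lambda>j. (z(i:=w)) j ^ k"] i by simp
    also have "(\<Sum>j\<in>{1..n}-{i}. (z(i:=w)) j ^ k) = (\<Sum>j\<in>{1..n}-{i}. z j ^ k)"
      by (rule sum.cong) auto
    finally show ?thesis .
  qed
  then show ?thesis by blast
qed

lemma stationary:
  assumes max: "\<forall>y. Pv n k E 1 y \<le> M * gv n k y" and eq: "Pv n k E 1 z = M * gv n k z"
    and i: "i \<in> {1..n}"
  shows "Fv k E 1 z i = M * z i ^ (k - 1)"
proof -
  define B where "B = (\<Sum>e\<in>{e\<in>E. i\<in>e}. \<Prod>s\<in>e-{i}. z s)"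
  define d where "d = real (hdeg E i)"
  obtain C1 where C1: "\<And>w. Pv n k E 1 (z(i:=w)) = d * w ^ k + real k * w * B + C1"
    using Pv_upd[OF i, of z] unfolding B_def d_def by blast
  obtain C2 where C2: "\<And>w. gv n k (z(i:=w)) = w ^ k + C2"
    using gv_upd[OF i, of z] by blast
  define h where "h w = M * (w ^ k + C2) - (d * w ^ k + real k * w * B + C1)" for w
  have hnn: "h w \<ge> 0" for w
    using max[rule_format, of "z(i:=w)"] unfolding h_def C1 C2 by simp
  have h0: "h (z i) = 0"
    using eq C1[of "z i"] C2[of "z i"] unfolding h_def by simp
  have der: "DERIV h (z i) :> M * (real k * z i ^ (k - 1)) - (d * (real k * z i ^ (k - 1)) + real k * B)"
    unfolding h_def[abs_def] by (auto intro!: derivative_eq_intros)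
  have "M * (real k * z i ^ (k - 1)) - (d * (real k * z i ^ (k - 1)) + real k * B) = 0"
  proof (rule DERIV_local_min[OF der, of 1])
    show "\<forall>y. \<bar>z i - y\<bar> < 1 \<longrightarrow> h (z i) \<le> h y"
    proof (intro allI impI)
      fix y show "h (z i) \<le> h y" using h0 hnn[of y] by linarith
    qed
  qed simp
  then have "real k * (M * z i ^ (k - 1) - (d * z i ^ (k - 1) + B)) = 0"
    by (simp add: algebra_simps)
  then have "M * z i ^ (k - 1) = d * z i ^ (k - 1) + B" using k4 by simp
  then show ?thesis by (simp add: Fv_def B_def d_def)
qed

lemma exists_max: "\<exists>z. gv n k z = 1 \<and> (\<forall>y. Pv n k E 1 y \<le> Pv n k E 1 z * gv n k y)"
proof -
  let ?V = "{1..n}"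
  let ?X = "product_topology (\<lambda>_. euclideanreal) ?V :: (nat \<Rightarrow> real) topology"
  define K where "K = {y \<in> topspace ?X. gv n k y \<in> {1}}"
  have contg: "continuous_map ?X euclideanreal (\<lambda>y. gv n k y)"
    unfolding gv_def by (intro continuous_intros) auto
  have contP: "continuous_map ?X euclideanreal (\<lambda>y. Pv n k E 1 y)"
  proof -
    have cp: "continuous_map ?X euclideanreal (\<lambda>y. \<Prod>s\<in>e. y s)" if e: "e \<in> E" for e
      by (intro continuous_intros) (use fine[OF e] Esub[OF e] in auto)
    show ?thesis unfolding Pv_def
      by (intro continuous_intros cp) (auto simp: finE)
  qed
  have closed: "closedin ?X K" unfolding K_def
    by (rule closedin_continuous_map_preimage[OF contg]) simp
  have sub: "K \<subseteq> PiE ?V (\<lambda>_. {-1..1})"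
  proof
    fix y assume y: "y \<in> K"
    then have y1: "y \<in> PiE ?V (\<lambda>_. UNIV)" and g1: "gv n k y = 1" by (auto simp: K_def)
    have "\<bar>y j\<bar> \<le> 1" if j: "j \<in> ?V" for j
    proof -
      have "y j ^ k \<le> gv n k y" unfolding gv_def
        by (rule member_le_sum) (use j ev in \<open>auto simp: zero_le_even_power\<close>)
      then have "\<bar>y j\<bar> ^ k \<le> 1" using g1 ev by (simp add: power_even_abs)
      then show ?thesis using k4 by (simp add: power_le_one_iff)
    qed
    then show "y \<in> PiE ?V (\<lambda>_. {-1..1})" using y1 by (auto simp: PiE_iff abs_le_iff)
  qed
  have compK: "compactin ?X K"
    by (rule closed_compactin[OF _ sub closed]) (simp add: compactin_PiE)
  have compP: "compact ((\<lambda>y. Pv n k E 1 y) ` K)"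
    using image_compactin[OF compK contP] by simp
  define u where "u = ((\<lambda>j. if j \<in> ?V then (if j = 1 then 1 else 0) else undefined) :: nat \<Rightarrow> real)"
  have "gv n k u = (\<Sum>j\<in>?V. if j = 1 then 1 else 0)"
    unfolding gv_def u_def by (rule sum.cong) (use k4 in auto)
  also have "\<dots> = 1" using n1 by simp
  finally have gu: "gv n k u = 1" .
  have "u \<in> topspace ?X" unfolding topspace_product_topology
    by (rule PiE_I) (auto simp: u_def)
  then have "u \<in> K" using gu by (simp add: K_def)
  then obtain z where zK: "z \<in> K" and zmax: "\<And>t. t \<in> K \<Longrightarrow> Pv n k E 1 t \<le> Pv n k E 1 z"
    using compact_attains_sup[OF compP] by blast
  have gz: "gv n k z = 1" using zK by (simp add: K_def)
  have "Pv n k E 1 y \<le> Pv n k E 1 z * gv n k y" for y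
  proof (cases "gv n k y = 0")
    case True
    have "\<forall>j\<in>?V. y j ^ k = 0"
      using True unfolding gv_def by (subst (asm) sum_nonneg_eq_0_iff) (use ev in \<open>auto simp: zero_le_even_power\<close>)
    then have "Pv n k E 1 y = Pv n k E 1 (\<lambda>j. 0 * y j)" by (intro Pv_cong) simp
    also have "\<dots> = 0" using k4 by (simp only: Pv_hom) simp
    finally show ?thesis using True by simp
  next
    case False
    then have gpos: "gv n k y > 0" using gv_nonneg[of y] by simp
    define c where "c = 1 / root k (gv n k y)"
    have ck: "c ^ k = 1 / gv n k y" using gpos k4
      by (simp add: c_def power_divide real_root_pow_pos)
    define y' where "y' = (\<lambda>j. if j \<in> ?V then c * y j else undefined)"
    have "gv n k y' = gv n k (\<lambda>j. c * y j)" by (rule gv_cong) (simp add: y'_def)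
    also have "\<dots> = 1" using ck gpos by (simp add: gv_hom)
    finally have gy': "gv n k y' = 1" .
    have "y' \<in> topspace ?X" unfolding topspace_product_topology
      by (rule PiE_I) (simp_all add: y'_def del: atLeastAtMost_iff)
    then have "y' \<in> K" using gy' by (simp add: K_def)
    then have "Pv n k E 1 y' \<le> Pv n k E 1 z" by (rule zmax)
    moreover have "Pv n k E 1 y' = Pv n k E 1 y / gv n k y"
    proof -
      have "Pv n k E 1 y' = Pv n k E 1 (\<lambda>j. c * y j)" by (rule Pv_cong) (simp add: y'_def)
      also have "\<dots> = Pv n k E 1 y / gv n k y" by (simp add: Pv_hom ck)
      finally show ?thesis .
    qed
    ultimately show ?thesis using gpos by (simp add: pos_divide_le_eq)
  qed
  then show ?thesis using gz by blast
qed

lemma ie_in: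
  assumes e: "e \<in> E" and s: "s \<in> e"
  shows "s \<in> ie ` E \<longleftrightarrow> s = ie e"
proof
  assume "s = ie e" then show "s \<in> ie ` E" using e by auto
next
  assume "s \<in> ie ` E"
  then obtain e' where e': "e' \<in> E" "s = ie e'" by auto
  have "hdeg E s = 1" using iec e' by (simp add: cored_vertex_def)
  then obtain a where a: "{e\<in>E. s\<in>e} = {a}" unfolding hdeg_def by (auto simp: card_1_singleton_iff)
  have "e \<in> {e\<in>E. s\<in>e}" "e' \<in> {e\<in>E. s\<in>e}" using e s e' iec by auto
  then have "e = e'" using a by auto
  then show "s = ie e" using e' by simp
qed

lemma ie_edges:
  assumes e0: "e0 \<in> E"
  shows "{e\<in>E. ie e0 \<in> e} = {e0}"
proof -
  have "hdeg E (ie e0) = 1" using iec e0 by (simp add: cored_vertex_def)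
  then obtain a where a: "{e\<in>E. ie e0\<in>e} = {a}" unfolding hdeg_def by (auto simp: card_1_singleton_iff)
  have "e0 \<in> {e\<in>E. ie e0\<in>e}" using e0 iec by auto
  then show ?thesis using a by auto
qed

lemma oddk: "odd (k - 1)" using ev k4 by presburger

lemma flip:
  assumes ev1: "\<forall>i\<in>{1..n}. Fv k E 1 x i = lam * x i ^ (k - 1)"
  shows "\<forall>i\<in>{1..n}. Fv k E (-1) (\<lambda>j. if j \<in> ie ` E then - x j else x j) i
            = lam * (if i \<in> ie ` E then - x i else x i) ^ (k - 1)"
proof
  fix i assume i: "i \<in> {1..n}"
  define y where "y = (\<lambda>j. if j \<in> ie ` E then - x j else x j)"
  have "Fv k E (-1) y i = lam * y i ^ (k - 1)"
  proof (cases "i \<in> ie ` E")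
    case True
    then obtain e0 where e0: "e0 \<in> E" and ie0: "i = ie e0" by auto
    have Ei: "{e\<in>E. i\<in>e} = {e0}" using ie_edges[OF e0] ie0 by simp
    have p: "(\<Prod>s\<in>e0-{i}. y s) = (\<Prod>s\<in>e0-{i}. x s)"
      by (rule prod.cong) (use ie_in[OF e0] ie0 in \<open>auto simp: y_def\<close>)
    have 1: "Fv k E 1 x i = real (hdeg E i) * x i ^ (k - 1) + (\<Prod>s\<in>e0-{i}. x s)"
      by (simp add: Fv_def Ei)
    have 2: "Fv k E (-1) y i = real (hdeg E i) * y i ^ (k - 1) - (\<Prod>s\<in>e0-{i}. x s)"
      by (simp add: Fv_def Ei p)
    have yi: "y i ^ (k - 1) = - (x i ^ (k - 1))" using True oddk by (simp add: y_def)
    show ?thesis using 1 2 yi ev1 i by (simp add: algebra_simps)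
  next
    case False
    have yi: "y i = x i" using False by (simp add: y_def)
    have p: "(\<Prod>s\<in>e-{i}. y s) = - (\<Prod>s\<in>e-{i}. x s)" if e: "e \<in> E" and ie: "i \<in> e" for e
    proof -
      let ?a = "ie e"
      have a: "?a \<in> e - {i}" using iec e False by force
      have fin: "finite (e - {i})" using fine[OF e] by simp
      have "(\<Prod>s\<in>e-{i}. y s) = y ?a * (\<Prod>s\<in>e-{i}-{?a}. y s)" by (rule prod.remove[OF fin a])
      also have "(\<Prod>s\<in>e-{i}-{?a}. y s) = (\<Prod>s\<in>e-{i}-{?a}. x s)"
        by (rule prod.cong) (use ie_in[OF e] in \<open>auto simp: y_def\<close>)
      also have "y ?a = - x ?a" using e by (simp add: y_def)
      also have "(\<Prod>s\<in>e-{i}. x s) = x ?a * (\<Prod>s\<in>e-{i}-{?a}. x s)" by (rule prod.remove[OF fin a])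
      ultimately show ?thesis by simp
    qed
    have "(\<Sum>e\<in>{e\<in>E. i\<in>e}. \<Prod>s\<in>e-{i}. y s) = (\<Sum>e\<in>{e\<in>E. i\<in>e}. - (\<Prod>s\<in>e-{i}. x s))"
      by (rule sum.cong) (use p in auto)
    then have "Fv k E (-1) y i = Fv k E 1 x i"
      by (simp add: Fv_def yi sum_negf)
    then show ?thesis using ev1 i yi by simp
  qed
  then show "Fv k E (-1) (\<lambda>j. if j \<in> ie ` E then - x j else x j) i
            = lam * (if i \<in> ie ` E then - x i else x i) ^ (k - 1)" by (simp add: y_def)
qed

lemma eig_Q: "H_eigenpair n k (signless_laplacian_tensor k E) \<mu> x \<longleftrightarrow>
   (\<exists>i\<in>{1..n}. x i \<noteq> 0) \<and> (\<forall>i\<in>{1..n}. Fv k E 1 x i = \<mu> * x i ^ (k - 1))"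
  unfolding H_eigenpair_def using tensor_formula(1)[OF hg] k4 by auto

lemma eig_L: "H_eigenpair n k (laplacian_tensor k E) \<mu> x \<longleftrightarrow>
   (\<exists>i\<in>{1..n}. x i \<noteq> 0) \<and> (\<forall>i\<in>{1..n}. Fv k E (-1) x i = \<mu> * x i ^ (k - 1))"
  unfolding H_eigenpair_def using tensor_formula(2)[OF hg] k4 by auto

lemma main:
  shows
    "(\<forall>x lam. (\<forall>i\<in>{1..n}. x i \<ge> 0) \<and> largest_H_eigenvalue n k (signless_laplacian_tensor k E) lam
        \<and> H_eigenpair n k (signless_laplacian_tensor k E) lam x \<longrightarrow>
       (\<exists>mu. largest_H_eigenvalue n k (laplacian_tensor k E) mu \<and>
          H_eigenpair n k (laplacian_tensor k E) mu (\<lambda>j. if j \<in> ie ` E then - x j else x j)))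
     \<and>
     (\<forall>x lam. largest_H_eigenvalue n k (laplacian_tensor k E) lam
        \<and> H_eigenpair n k (laplacian_tensor k E) lam x \<longrightarrow>
       (\<exists>mu. largest_H_eigenvalue n k (signless_laplacian_tensor k E) mu \<and>
          H_eigenpair n k (signless_laplacian_tensor k E) mu (\<lambda>i. \<bar>x i\<bar>)))"
proof -
  obtain z where gz: "gv n k z = 1" and zmax: "\<forall>y. Pv n k E 1 y \<le> Pv n k E 1 z * gv n k y"
    using exists_max by blast
  define M where "M = Pv n k E 1 z"
  have Mmax: "\<forall>y. Pv n k E 1 y \<le> M * gv n k y" using zmax by (simp add: M_def mult.commute)
  have stat: "\<forall>i\<in>{1..n}. Fv k E 1 w i = M * w i ^ (k - 1)" if "Pv n k E 1 w = M * gv n k w" for w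
    using stationary[OF Mmax that] by blast
  have nz: "\<exists>i\<in>{1..n}. w i \<noteq> 0" if "gv n k w > 0" for w
  proof (rule ccontr)
    assume "\<not> ?thesis"
    then have "gv n k w = 0" unfolding gv_def using k4 by simp
    then show False using that by simp
  qed
  have F2: "H_eigenpair n k (signless_laplacian_tensor k E) M (\<lambda>j. \<bar>z j\<bar>)"
  proof -
    have "Pv n k E 1 z \<le> Pv n k E 1 (\<lambda>j. \<bar>z j\<bar>)" by (rule Pv_abs) simp
    moreover have "Pv n k E 1 (\<lambda>j. \<bar>z j\<bar>) \<le> M * gv n k (\<lambda>j. \<bar>z j\<bar>)" using Mmax by blast
    ultimately have "Pv n k E 1 (\<lambda>j. \<bar>z j\<bar>) = M * gv n k (\<lambda>j. \<bar>z j\<bar>)"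
      using gz by (simp add: gv_abs M_def)
    then have "\<forall>i\<in>{1..n}. Fv k E 1 (\<lambda>j. \<bar>z j\<bar>) i = M * \<bar>z i\<bar> ^ (k - 1)" using stat by blast
    moreover have "\<exists>i\<in>{1..n}. \<bar>z i\<bar> \<noteq> 0" using nz[of z] gz by simp
    ultimately show ?thesis by (simp add: eig_Q)
  qed
  have F3: "\<mu> \<le> M" if hev: "H_eigenvalue n k (signless_laplacian_tensor k E) \<mu>" for \<mu>
  proof -
    obtain w where w: "H_eigenpair n k (signless_laplacian_tensor k E) \<mu> w" using hev H_eigenvalue_def by blast
    then have "Pv n k E 1 w = \<mu> * gv n k w" and gp: "gv n k w > 0"
      using rayleigh gv_pos by (auto simp: eig_Q)
    then have "\<mu> * gv n k w \<le> M * gv n k w" using Mmax by metis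
    then show ?thesis using gp by simp
  qed
  have F4: "\<mu> \<le> M" if hev: "H_eigenvalue n k (laplacian_tensor k E) \<mu>" for \<mu>
  proof -
    obtain w where w: "H_eigenpair n k (laplacian_tensor k E) \<mu> w" using hev H_eigenvalue_def by blast
    then have "Pv n k E (-1) w = \<mu> * gv n k w" and gp: "gv n k w > 0"
      using rayleigh gv_pos by (auto simp: eig_L)
    moreover have "Pv n k E (-1) w \<le> Pv n k E 1 (\<lambda>j. \<bar>w j\<bar>)" by (rule Pv_abs) simp
    moreover have "Pv n k E 1 (\<lambda>j. \<bar>w j\<bar>) \<le> M * gv n k w" using Mmax gv_abs by metis
    ultimately have "\<mu> * gv n k w \<le> M * gv n k w" by linarith
    then show ?thesis using gp by simp
  qed
  have QM: "largest_H_eigenvalue n k (signless_laplacian_tensor k E) M"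
    unfolding largest_H_eigenvalue_def H_eigenvalue_def using F2 F3 H_eigenvalue_def by blast
  have flipL: "H_eigenpair n k (laplacian_tensor k E) \<mu> (\<lambda>j. if j \<in> ie ` E then - x j else x j)"
    if "H_eigenpair n k (signless_laplacian_tensor k E) \<mu> x" for \<mu> x
  proof -
    have "\<forall>i\<in>{1..n}. Fv k E (-1) (\<lambda>j. if j \<in> ie ` E then - x j else x j) i
            = \<mu> * (if i \<in> ie ` E then - x i else x i) ^ (k - 1)"
      using flip that by (simp add: eig_Q)
    moreover have "\<exists>i\<in>{1..n}. (if i \<in> ie ` E then - x i else x i) \<noteq> 0"
      using that by (auto simp: eig_Q)
    ultimately show ?thesis by (simp add: eig_L)
  qed
  show ?thesis
  proof (intro conjI allI impI)
    fix x lam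
    assume a: "(\<forall>i\<in>{1..n}. x i \<ge> 0) \<and> largest_H_eigenvalue n k (signless_laplacian_tensor k E) lam
        \<and> H_eigenpair n k (signless_laplacian_tensor k E) lam x"
    have lamM: "M \<le> lam" using a F2 unfolding largest_H_eigenvalue_def H_eigenvalue_def by blast
    have ep: "H_eigenpair n k (laplacian_tensor k E) lam (\<lambda>j. if j \<in> ie ` E then - x j else x j)"
      using flipL a by blast
    have "largest_H_eigenvalue n k (laplacian_tensor k E) lam"
      unfolding largest_H_eigenvalue_def using ep F4 lamM H_eigenvalue_def by force
    then show "\<exists>mu. largest_H_eigenvalue n k (laplacian_tensor k E) mu \<and>
          H_eigenpair n k (laplacian_tensor k E) mu (\<lambda>j. if j \<in> ie ` E then - x j else x j)"
      using ep by blast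
  next
    fix x lam
    assume a: "largest_H_eigenvalue n k (laplacian_tensor k E) lam
        \<and> H_eigenpair n k (laplacian_tensor k E) lam x"
    have "H_eigenpair n k (laplacian_tensor k E) M (\<lambda>j. if j \<in> ie ` E then - \<bar>z j\<bar> else \<bar>z j\<bar>)"
      using flipL[OF F2] .
    then have Mlam: "M \<le> lam" using a unfolding largest_H_eigenvalue_def H_eigenvalue_def by blast
    have lamM: "lam \<le> M" using a F4 unfolding largest_H_eigenvalue_def by blast
    have xe: "\<forall>i\<in>{1..n}. Fv k E (-1) x i = lam * x i ^ (k - 1)" and xnz: "\<exists>i\<in>{1..n}. x i \<noteq> 0"
      using a by (auto simp: eig_L)
    have "Pv n k E (-1) x = lam * gv n k x" using rayleigh[OF xe] .
    moreover have "Pv n k E (-1) x \<le> Pv n k E 1 (\<lambda>j. \<bar>x j\<bar>)" by (rule Pv_abs) simp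
    moreover have "Pv n k E 1 (\<lambda>j. \<bar>x j\<bar>) \<le> M * gv n k (\<lambda>j. \<bar>x j\<bar>)" using Mmax by blast
    ultimately have "Pv n k E 1 (\<lambda>j. \<bar>x j\<bar>) = M * gv n k (\<lambda>j. \<bar>x j\<bar>)"
      using Mlam lamM by (simp add: gv_abs)
    then have "\<forall>i\<in>{1..n}. Fv k E 1 (\<lambda>j. \<bar>x j\<bar>) i = M * \<bar>x i\<bar> ^ (k - 1)" using stat by blast
    then have "H_eigenpair n k (signless_laplacian_tensor k E) M (\<lambda>j. \<bar>x j\<bar>)"
      using xnz by (simp add: eig_Q)
    then show "\<exists>mu. largest_H_eigenvalue n k (signless_laplacian_tensor k E) mu \<and>
          H_eigenpair n k (signless_laplacian_tensor k E) mu (\<lambda>i. \<bar>x i\<bar>)"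
      using QM by blast
  qed
qed

end

theorem proposition3p3:
  fixes n k :: nat and E :: "nat set set" and ie :: "nat set \<Rightarrow> nat"
  assumes "even k" and "k \<ge> 4"
    and "k_uniform_hypergraph n k E"
    and "cored E"
    and "\<forall>e\<in>E. ie e \<in> e \<and> cored_vertex E (ie e)"
  shows
    "(\<forall>x lam. (\<forall>i\<in>{1..n}. x i \<ge> 0) \<and> largest_H_eigenvalue n k (signless_laplacian_tensor k E) lam
        \<and> H_eigenpair n k (signless_laplacian_tensor k E) lam x \<longrightarrow>
       (\<exists>mu. largest_H_eigenvalue n k (laplacian_tensor k E) mu \<and>
          H_eigenpair n k (laplacian_tensor k E) mu (\<lambda>j. if j \<in> ie ` E then - x j else x j)))
     \<and>
     (\<forall>x lam. largest_H_eigenvalue n k (laplacian_tensor k E) lam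
        \<and> H_eigenpair n k (laplacian_tensor k E) lam x \<longrightarrow>
       (\<exists>mu. largest_H_eigenvalue n k (signless_laplacian_tensor k E) mu \<and>
          H_eigenpair n k (signless_laplacian_tensor k E) mu (\<lambda>i. \<bar>x i\<bar>)))"
proof -
  interpret chg n k E ie using assms by unfold_locales
  show ?thesis by (rule main)
qed

end
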